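(* Let $d\ge 3$, $\lambda>0$, $\rho_0=o(1)$, $\mu=\rho_0/(d+\lambda)$. Let $a,b,c\ge0$ be a trajectory of the spectral gradient flow reduced dynamics \[ \dot a=-2\,\mathrm{sgn}(g_{w_\star})\sqrt a,\quad \dot b=-2\,\mathrm{sgn}(g_v)\sqrt b,\quad \dot c=-2\,\mathrm{sgn}(g_\perp)\sqrt c, \] with $a(0)=b(0)=c(0)=\mu$, where $r=a+(1+\lambda)b+(d-2)c$, $g_{w_\star}=4(r+2a-3)$, $g_v=4(1+\lambda)(r+2(1+\lambda)b-1)$, $g_\perp=4(r+2c-1)$, and $\mathrm{sgn}(0)=0$. Let $T_1'=\inf\{t\ge0: r(t)+2(1+\lambda)b(t)\ge1\}$ and $\alpha=\sqrt a$, $\beta=\sqrt b$, $\gamma=\sqrt c$. Then, for $d$ large enough, for all $t\in[0,T_1']$, \[ \alpha(t)=\beta(t)=\gamma(t)=\sqrt\mu+t,\quad\text{equivalently}\quad a(t)=b(t)=c(t)=(\sqrt\mu+t)^2, \] and $T_1'=\Theta((d+\lambda)^{-1/2})$.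
   Context: These ODEs describe the population spectral gradient flow $\dot W=-\mathrm{polar}(\nabla_W\mathcal L(W))$ for the phase-retrieval model $y=(x^\top w_\star)^2+\nu$, $x\sim\mathcal N(0,I_d+\lambda vv^\top)$ with $v\perp w_\star$ unit vectors, network $f_W(x)=\sum_{j=1}^d(w_j^\top x)^2$, in the coordinates $WW^\top=a\,w_\star w_\star^\top+b\,vv^\top+c(I-w_\star w_\star^\top-vv^\top)$; $\mathrm{polar}(A)=A(A^\top A)^{-1/2}$. *)

theory Defs
  imports "HOL-Analysis.Analysis"
begin

definition r_val :: "real \<Rightarrow> nat \<Rightarrow> real \<Rightarrow> real \<Rightarrow> real \<Rightarrow> real" where
  "r_val lam d A B C = A + (1 + lam) * B + (real d - 2) * C"

definition g_w :: "real \<Rightarrow> nat \<Rightarrow> real \<Rightarrow> real \<Rightarrow> real \<Rightarrow> real" where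
  "g_w lam d A B C = 4 * (r_val lam d A B C + 2 * A - 3)"

definition g_v :: "real \<Rightarrow> nat \<Rightarrow> real \<Rightarrow> real \<Rightarrow> real \<Rightarrow> real" where
  "g_v lam d A B C = 4 * (1 + lam) * (r_val lam d A B C + 2 * (1 + lam) * B - 1)"

definition g_perp :: "real \<Rightarrow> nat \<Rightarrow> real \<Rightarrow> real \<Rightarrow> real \<Rightarrow> real" where
  "g_perp lam d A B C = 4 * (r_val lam d A B C + 2 * C - 1)"

definition stopq :: "real \<Rightarrow> nat \<Rightarrow> (real \<Rightarrow> real) \<Rightarrow> (real \<Rightarrow> real) \<Rightarrow> (real \<Rightarrow> real) \<Rightarrow> real \<Rightarrow> real" where
  "stopq lam d a b c t = r_val lam d (a t) (b t) (c t) + 2 * (1 + lam) * b t"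

definition T1p :: "real \<Rightarrow> nat \<Rightarrow> (real \<Rightarrow> real) \<Rightarrow> (real \<Rightarrow> real) \<Rightarrow> (real \<Rightarrow> real) \<Rightarrow> real" where
  "T1p lam d a b c = Inf {t. 0 \<le> t \<and> stopq lam d a b c t \<ge> 1}"

text \<open>A trajectory of the reduced spectral-gradient-flow dynamics (sgn 0 = 0 is Isabelle's sgn)
  started at a = b = c = mu: a, b, c are nonnegative and continuous on [0,oo), and the ODEs hold
  (right derivative at t = 0) at every time t >= 0 up to the first time the stopping
  quantity reaches 1.\<close>
definition sgf_traj :: "real \<Rightarrow> nat \<Rightarrow> real \<Rightarrow> (real \<Rightarrow> real) \<Rightarrow> (real \<Rightarrow> real) \<Rightarrow> (real \<Rightarrow> real) \<Rightarrow> bool" where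
  "sgf_traj lam d mu a b c \<longleftrightarrow>
     a 0 = mu \<and> b 0 = mu \<and> c 0 = mu \<and>
     (\<forall>t\<ge>0. a t \<ge> 0 \<and> b t \<ge> 0 \<and> c t \<ge> 0) \<and>
     continuous_on {0..} a \<and> continuous_on {0..} b \<and> continuous_on {0..} c \<and>
     (\<forall>t\<ge>0. (\<forall>s\<in>{0..t}. stopq lam d a b c s < 1) \<longrightarrow>
        (a has_real_derivative (- 2 * sgn (g_w lam d (a t) (b t) (c t)) * sqrt (a t))) (at t within {0..}) \<and>
        (b has_real_derivative (- 2 * sgn (g_v lam d (a t) (b t) (c t)) * sqrt (b t))) (at t within {0..}) \<and>
        (c has_real_derivative (- 2 * sgn (g_perp lam d (a t) (b t) (c t)) * sqrt (c t))) (at t within {0..}))"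

end

theory Submission
  imports Defs
begin


lemma deriv_at_pos:
  assumes "(f has_real_derivative D) (at s within {0..})" "0 < (s::real)"
  shows "(f has_real_derivative D) (at s)"
  using assms at_within_interior[of s "{0..}"] by simp

lemma sqrt_deriv:
  assumes "(x has_real_derivative D) (at s)" "x s > 0"
  shows "((\<lambda>u. sqrt (x u) - u) has_real_derivative (D / (2 * sqrt (x s)) - 1)) (at s)"
proof -
  have "((\<lambda>u. sqrt (x u)) has_real_derivative (inverse (sqrt (x s)) / 2 * D)) (at s)"
    using DERIV_chain2[OF DERIV_real_sqrt[OF assms(2)] assms(1)] .
  then have "((\<lambda>u. sqrt (x u) - u) has_real_derivative (inverse (sqrt (x s)) / 2 * D - 1)) (at s)"
    using DERIV_diff[OF _ DERIV_ident] by blast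
  then show ?thesis by (simp add: field_simps)
qed

lemma exact_sol:
  fixes x :: "real \<Rightarrow> real"
  assumes T: "0 \<le> T" and cont: "continuous_on {0..T} x" and x0: "x 0 = mu" and mu: "mu > 0"
    and der: "\<And>s. 0 < s \<Longrightarrow> s < T \<Longrightarrow> (x has_real_derivative 2 * sqrt (x s)) (at s)"
    and nn: "\<And>s. 0 \<le> s \<Longrightarrow> s \<le> T \<Longrightarrow> 0 \<le> x s"
  shows "\<forall>s\<in>{0..T}. sqrt (x s) = sqrt mu + s"
proof
  fix s assume s: "s \<in> {0..T}"
  have pos: "x u > 0" if uT: "u \<in> {0..T}" for u
  proof -
    have dd: "\<exists>D. (x has_real_derivative D) (at y) \<and> D \<ge> 0" if y: "0 < y" "y < u" for y
    proof -
      have "y < T" using uT y by auto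
      then show ?thesis
        using der[OF y(1)] nn[of y] y by (intro exI[of _ "2 * sqrt (x y)"]) auto
    qed
    have "x 0 \<le> x u"
      by (rule DERIV_nonneg_imp_increasing_open[of 0 u x, OF _ dd])
         (use cont that in \<open>auto intro: continuous_on_subset\<close>)
    then show ?thesis using x0 mu by simp
  qed
  show "sqrt (x s) = sqrt mu + s"
  proof (cases "s = 0")
    case True then show ?thesis using x0 by simp
  next
    case False
    then have s0: "0 < s" using s by auto
    have "(\<lambda>u. sqrt (x u) - u) s = (\<lambda>u. sqrt (x u) - u) 0"
    proof (rule DERIV_isconst_end[OF s0])
      show "continuous_on {0..s} (\<lambda>u. sqrt (x u) - u)"
        using cont s by (auto intro!: continuous_intros intro: continuous_on_subset)
      fix u assume u: "0 < u" "u < s"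
      have xu: "x u > 0" using pos u s by auto
      have "((\<lambda>u. sqrt (x u) - u) has_real_derivative (2 * sqrt (x u) / (2 * sqrt (x u)) - 1)) (at u)"
        using sqrt_deriv[OF der xu] u s by auto
      then show "((\<lambda>u. sqrt (x u) - u) has_real_derivative 0) (at u)" using xu by simp
    qed
    then show ?thesis using x0 by simp
  qed
qed

lemma upper_sol:
  fixes x :: "real \<Rightarrow> real"
  assumes T: "0 \<le> T" and cont: "continuous_on {0..T} x" and x0: "x 0 = mu" and mu: "mu > 0"
    and der: "\<And>s. 0 < s \<Longrightarrow> s < T \<Longrightarrow> \<exists>D. (x has_real_derivative D) (at s) \<and> D \<le> 2 * sqrt (x s)"
  shows "\<forall>s\<in>{0..T}. sqrt (x s) \<le> sqrt mu + s"
proof (rule ccontr)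
  assume "\<not> ?thesis"
  then obtain t1 where t1: "t1 \<in> {0..T}" "sqrt (x t1) > sqrt mu + t1" by force
  define S where "S = {0..t1} \<inter> (\<lambda>u. sqrt (x u) - u) -` {..sqrt mu}"
  have contt: "continuous_on {0..t1} (\<lambda>u. sqrt (x u) - u)"
    using cont t1 by (auto intro!: continuous_intros intro: continuous_on_subset)
  have cl: "closed S" unfolding S_def
    by (rule continuous_closed_preimage[OF contt]) auto
  have "0 \<in> S" using t1 x0 unfolding S_def by auto
  moreover have "bdd_above S" unfolding S_def by (auto intro: bdd_aboveI[where M=t1])
  ultimately have t2S: "Sup S \<in> S" using closed_contains_Sup cl by blast
  define t2 where "t2 = Sup S"
  have t2: "0 \<le> t2" "t2 \<le> t1" "sqrt (x t2) - t2 \<le> sqrt mu" using t2S unfolding t2_def S_def by auto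
  have t21: "t2 < t1" using t2 t1 by (metis order.order_iff_strict not_le diff_le_eq add.commute)
  have outside: "sqrt (x u) > sqrt mu + u" if "t2 < u" "u \<le> t1" for u
  proof (rule ccontr)
    assume "\<not> ?thesis"
    then have "u \<in> S" using that t2 unfolding S_def by auto
    then have "u \<le> t2" unfolding t2_def using \<open>bdd_above S\<close> by (simp add: cSup_upper)
    then show False using that by simp
  qed
  have "(\<lambda>u. sqrt (x u) - u) t1 \<le> (\<lambda>u. sqrt (x u) - u) t2"
  proof (rule DERIV_nonpos_imp_decreasing_open[OF less_imp_le[OF t21]])
    show "continuous_on {t2..t1} (\<lambda>u. sqrt (x u) - u)"
      using contt t2 by (auto intro: continuous_on_subset)
    fix u assume u: "t2 < u" "u < t1"
    have "sqrt mu > 0" using mu by simp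
    then have "sqrt (x u) > 0" using outside[of u] u t2 by linarith
    then have xu: "x u > 0" by simp
    obtain D where D: "(x has_real_derivative D) (at u)" "D \<le> 2 * sqrt (x u)"
      using der[of u] u t2 t1 by auto
    have "D / (2 * sqrt (x u)) - 1 \<le> 0" using D(2) xu by (simp add: divide_le_eq)
    then show "\<exists>y. ((\<lambda>u. sqrt (x u) - u) has_real_derivative y) (at u) \<and> y \<le> 0"
      using sqrt_deriv[OF D(1) xu] by blast
  qed
  then show False using t2 t1 by simp
qed

lemma sgn_bound: "- 2 * sgn (g::real) * sqrt x \<le> 2 * sqrt x" if "0 \<le> x"
  using that by (cases "g > 0"; cases "g < 0") (auto simp: sgn_real_def)

lemma K:
  assumes lam: "lam > 0" and tr: "sgf_traj lam d mu a b c" and mu: "mu > 0" and t0: "0 \<le> t0"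
    and st: "\<forall>s\<in>{0..<t0}. stopq lam d a b c s < 1"
  shows "\<forall>s\<in>{0..t0}. sqrt (a s) = sqrt mu + s \<and> sqrt (b s) = sqrt mu + s \<and> sqrt (c s) = sqrt mu + s"
proof -
  have a0: "a 0 = mu" and b0: "b 0 = mu" and c0: "c 0 = mu"
    and nn: "\<And>t. t \<ge> 0 \<Longrightarrow> a t \<ge> 0 \<and> b t \<ge> 0 \<and> c t \<ge> 0"
    and ca: "continuous_on {0..} a" and cb: "continuous_on {0..} b" and cc: "continuous_on {0..} c"
    and ode: "\<And>t. t \<ge> 0 \<Longrightarrow> (\<forall>s\<in>{0..t}. stopq lam d a b c s < 1) \<Longrightarrow>
        (a has_real_derivative (- 2 * sgn (g_w lam d (a t) (b t) (c t)) * sqrt (a t))) (at t within {0..}) \<and>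
        (b has_real_derivative (- 2 * sgn (g_v lam d (a t) (b t) (c t)) * sqrt (b t))) (at t within {0..}) \<and>
        (c has_real_derivative (- 2 * sgn (g_perp lam d (a t) (b t) (c t)) * sqrt (c t))) (at t within {0..})"
    using tr unfolding sgf_traj_def by auto
  have ca': "continuous_on {0..t0} a" using ca by (rule continuous_on_subset) auto
  have cb': "continuous_on {0..t0} b" using cb by (rule continuous_on_subset) auto
  have cc': "continuous_on {0..t0} c" using cc by (rule continuous_on_subset) auto
  have D: "(a has_real_derivative (- 2 * sgn (g_w lam d (a s) (b s) (c s)) * sqrt (a s))) (at s) \<and>
        (b has_real_derivative (- 2 * sgn (g_v lam d (a s) (b s) (c s)) * sqrt (b s))) (at s) \<and>
        (c has_real_derivative (- 2 * sgn (g_perp lam d (a s) (b s) (c s)) * sqrt (c s))) (at s)"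
    if s: "0 < s" "s < t0" for s
  proof -
    have "\<forall>u\<in>{0..s}. stopq lam d a b c u < 1" using st s by auto
    then have "(a has_real_derivative (- 2 * sgn (g_w lam d (a s) (b s) (c s)) * sqrt (a s))) (at s within {0..}) \<and>
        (b has_real_derivative (- 2 * sgn (g_v lam d (a s) (b s) (c s)) * sqrt (b s))) (at s within {0..}) \<and>
        (c has_real_derivative (- 2 * sgn (g_perp lam d (a s) (b s) (c s)) * sqrt (c s))) (at s within {0..})"
      using ode[of s] s by simp
    then show ?thesis using deriv_at_pos[OF _ s(1)] by blast
  qed
  have sq: "stopq lam d a b c s < 1" if "0 < s" "s < t0" for s using st that by auto
  have gv: "sgn (g_v lam d (a s) (b s) (c s)) = -1" if "0 < s" "s < t0" for s
  proof -
    have "g_v lam d (a s) (b s) (c s) = 4 * (1 + lam) * (stopq lam d a b c s - 1)"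
      unfolding g_v_def stopq_def by simp
    also have "\<dots> < 0" using sq[OF that] lam by (simp add: mult_pos_neg)
    finally show ?thesis by simp
  qed
  have bsol: "\<forall>s\<in>{0..t0}. sqrt (b s) = sqrt mu + s"
  proof (rule exact_sol[OF t0 cb' b0 mu])
    fix s :: real assume s: "0 < s" "s < t0"
    have "(b has_real_derivative (- 2 * sgn (g_v lam d (a s) (b s) (c s)) * sqrt (b s))) (at s)"
      using D[OF s] by blast
    then show "(b has_real_derivative 2 * sqrt (b s)) (at s)" by (simp only: gv[OF s]) simp
  next
    fix s :: real assume "0 \<le> s" "s \<le> t0" then show "0 \<le> b s" using nn[of s] by blast
  qed
  have aup: "\<forall>s\<in>{0..t0}. sqrt (a s) \<le> sqrt mu + s"
  proof (rule upper_sol[OF t0 ca' a0 mu])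
    fix s :: real assume s: "0 < s" "s < t0"
    have "(a has_real_derivative (- 2 * sgn (g_w lam d (a s) (b s) (c s)) * sqrt (a s))) (at s)"
      using D[OF s] by blast
    moreover have "- 2 * sgn (g_w lam d (a s) (b s) (c s)) * sqrt (a s) \<le> 2 * sqrt (a s)"
      by (rule sgn_bound) (use nn[of s] s in simp)
    ultimately show "\<exists>D. (a has_real_derivative D) (at s) \<and> D \<le> 2 * sqrt (a s)" by blast
  qed
  have cup: "\<forall>s\<in>{0..t0}. sqrt (c s) \<le> sqrt mu + s"
  proof (rule upper_sol[OF t0 cc' c0 mu])
    fix s :: real assume s: "0 < s" "s < t0"
    have "(c has_real_derivative (- 2 * sgn (g_perp lam d (a s) (b s) (c s)) * sqrt (c s))) (at s)"
      using D[OF s] by blast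
    moreover have "- 2 * sgn (g_perp lam d (a s) (b s) (c s)) * sqrt (c s) \<le> 2 * sqrt (c s)"
      by (rule sgn_bound) (use nn[of s] s in simp)
    ultimately show "\<exists>D. (c has_real_derivative D) (at s) \<and> D \<le> 2 * sqrt (c s)" by blast
  qed
  have ab: "a s \<le> b s \<and> c s \<le> b s" if "0 \<le> s" "s \<le> t0" for s
  proof -
    have "sqrt (a s) \<le> sqrt (b s)" "sqrt (c s) \<le> sqrt (b s)" using aup cup bsol that by auto
    then show ?thesis by simp
  qed
  have gw: "sgn (g_w lam d (a s) (b s) (c s)) = -1 \<and> sgn (g_perp lam d (a s) (b s) (c s)) = -1"
    if "0 < s" "s < t0" for s
  proof -
    have q: "r_val lam d (a s) (b s) (c s) = stopq lam d a b c s - 2 * (1 + lam) * b s"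
      unfolding stopq_def by simp
    have "lam * b s \<ge> 0" using lam nn[of s] that by simp
    then have "g_w lam d (a s) (b s) (c s) < 0" "g_perp lam d (a s) (b s) (c s) < 0"
      unfolding g_w_def g_perp_def q using sq[OF that] ab[of s] that nn[of s]
      by (simp_all add: algebra_simps)
    then show ?thesis by simp
  qed
  have asol: "\<forall>s\<in>{0..t0}. sqrt (a s) = sqrt mu + s"
  proof (rule exact_sol[OF t0 ca' a0 mu])
    fix s :: real assume s: "0 < s" "s < t0"
    have "(a has_real_derivative (- 2 * sgn (g_w lam d (a s) (b s) (c s)) * sqrt (a s))) (at s)"
      using D[OF s] by blast
    then show "(a has_real_derivative 2 * sqrt (a s)) (at s)" using gw[OF s] by simp
  next
    fix s :: real assume "0 \<le> s" "s \<le> t0" then show "0 \<le> a s" using nn[of s] by blast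
  qed
  have csol: "\<forall>s\<in>{0..t0}. sqrt (c s) = sqrt mu + s"
  proof (rule exact_sol[OF t0 cc' c0 mu])
    fix s :: real assume s: "0 < s" "s < t0"
    have "(c has_real_derivative (- 2 * sgn (g_perp lam d (a s) (b s) (c s)) * sqrt (c s))) (at s)"
      using D[OF s] by blast
    then show "(c has_real_derivative 2 * sqrt (c s)) (at s)" using gw[OF s] by simp
  next
    fix s :: real assume "0 \<le> s" "s \<le> t0" then show "0 \<le> c s" using nn[of s] by blast
  qed
  show ?thesis using asol bsol csol by auto
qed

lemma stopq_eq:
  assumes "a s = v" "b s = v" "c s = v"
  shows "stopq lam d a b c s = (real d + 2 + 3 * lam) * v"
  using assms unfolding stopq_def r_val_def by (simp add: algebra_simps)

theorem lemmaC1: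
  fixes lam :: real and rho0 :: "nat \<Rightarrow> real"
  assumes "lam > 0"
    and "\<And>d. rho0 d > 0"
    and "rho0 \<longlonglongrightarrow> 0"
  shows "\<exists>D C1 C2. C1 > 0 \<and> C2 > 0 \<and>
    (\<forall>d\<ge>D. d \<ge> 3 \<longrightarrow>
      (\<forall>a b c. sgf_traj lam d (rho0 d / (real d + lam)) a b c \<longrightarrow>
        (let mu = rho0 d / (real d + lam); T = T1p lam d a b c in
          {t. 0 \<le> t \<and> stopq lam d a b c t \<ge> 1} \<noteq> {} \<and>
          (\<forall>t\<in>{0..T}. sqrt (a t) = sqrt mu + t \<and> sqrt (b t) = sqrt mu + t \<and>
                         sqrt (c t) = sqrt mu + t \<and>
                         a t = (sqrt mu + t)\<^sup>2 \<and> b t = (sqrt mu + t)\<^sup>2 \<and> c t = (sqrt mu + t)\<^sup>2) \<and>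
          C1 / sqrt (real d + lam) \<le> T \<and> T \<le> C2 / sqrt (real d + lam))))"
proof -
  have lam: "lam > 0" using assms(1) .
  have "eventually (\<lambda>n. rho0 n < 1/16) sequentially"
    by (rule order_tendstoD(2)[OF assms(3)]) simp
  then obtain N where N: "\<And>n. n \<ge> N \<Longrightarrow> rho0 n < 1/16"
    unfolding eventually_sequentially by blast
  show ?thesis
  proof (rule exI[of _ N], rule exI[of _ "1/4::real"], rule exI[of _ "1::real"], intro conjI)
    show "(1/4::real) > 0" "(1::real) > 0" by simp_all
  next
  show "\<forall>d\<ge>N. d \<ge> 3 \<longrightarrow>
      (\<forall>a b c. sgf_traj lam d (rho0 d / (real d + lam)) a b c \<longrightarrow>
        (let mu = rho0 d / (real d + lam); T = T1p lam d a b c in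
          {t. 0 \<le> t \<and> stopq lam d a b c t \<ge> 1} \<noteq> {} \<and>
          (\<forall>t\<in>{0..T}. sqrt (a t) = sqrt mu + t \<and> sqrt (b t) = sqrt mu + t \<and>
                         sqrt (c t) = sqrt mu + t \<and>
                         a t = (sqrt mu + t)\<^sup>2 \<and> b t = (sqrt mu + t)\<^sup>2 \<and> c t = (sqrt mu + t)\<^sup>2) \<and>
          1/4 / sqrt (real d + lam) \<le> T \<and> T \<le> 1 / sqrt (real d + lam)))"
  proof (intro allI impI)
    fix d :: nat and a b c :: "real \<Rightarrow> real"
    assume dN: "d \<ge> N" and d3: "d \<ge> 3" and tr: "sgf_traj lam d (rho0 d / (real d + lam)) a b c"
    define mu where "mu = rho0 d / (real d + lam)"
    define k where "k = real d + 2 + 3 * lam"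
    define L where "L = real d + lam"
    define S where "S = {t. 0 \<le> t \<and> stopq lam d a b c t \<ge> 1}"
    define T where "T = T1p lam d a b c"
    have TS: "T = Inf S" unfolding T_def T1p_def S_def by simp
    have rho: "0 < rho0 d" "rho0 d < 1/16" using assms(2) N dN by auto
    have L0: "L > 0" unfolding L_def using lam by simp
    have mu0: "mu > 0" unfolding mu_def using rho lam by simp
    have tr': "sgf_traj lam d mu a b c" using tr unfolding mu_def .
    have nn: "\<And>t. t \<ge> 0 \<Longrightarrow> a t \<ge> 0 \<and> b t \<ge> 0 \<and> c t \<ge> 0"
      and ca: "continuous_on {0..} a" and cb: "continuous_on {0..} b" and cc: "continuous_on {0..} c"
      using tr' unfolding sgf_traj_def by auto
    have k1: "k \<ge> 1" unfolding k_def using lam d3 by simp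
    have kL: "L \<le> k" "k \<le> 4 * L" unfolding k_def L_def using lam d3 by simp_all
    have sk: "sqrt L \<le> sqrt k" "sqrt k \<le> 2 * sqrt L"
      using kL real_sqrt_le_mono[OF kL(2)] by (auto simp: real_sqrt_mult)
    have sL: "sqrt L > 0" using L0 by simp
    have smu: "sqrt mu \<le> (1/4) / sqrt L"
    proof -
      have "sqrt (rho0 d) \<le> sqrt (1/16)" using rho by (simp only: real_sqrt_le_iff)
      also have "sqrt (1/16::real) = 1/4" by (simp add: real_sqrt_divide)
      finally have "sqrt (rho0 d) \<le> 1/4" .
      then have "sqrt (rho0 d) / sqrt L \<le> (1/4) / sqrt L" using sL by (intro divide_right_mono) auto
      then show ?thesis unfolding mu_def L_def[symmetric] by (simp only: real_sqrt_divide)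
    qed
    have ik: "1 / sqrt k \<ge> (1/2) / sqrt L" "1 / sqrt k \<le> 1 / sqrt L"
      using sk sL by (auto simp: field_simps)
    have sq: "(sqrt mu + s)\<^sup>2 = x" if "sqrt x = sqrt mu + s" "x \<ge> 0" for x s
      using that by (metis real_sqrt_pow2)
    have Sne: "S \<noteq> {}"
    proof
      assume e: "S = {}"
      have "\<forall>s\<in>{0..<1}. stopq lam d a b c s < 1" using e unfolding S_def by force
      from K[OF lam tr' mu0 _ this] have f: "sqrt (a 1) = sqrt mu + 1" "sqrt (b 1) = sqrt mu + 1"
        "sqrt (c 1) = sqrt mu + 1" by auto
      have v: "a 1 = (sqrt mu + 1)\<^sup>2" "b 1 = (sqrt mu + 1)\<^sup>2" "c 1 = (sqrt mu + 1)\<^sup>2"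
        using sq[OF f(1)] sq[OF f(2)] sq[OF f(3)] nn[of 1] by auto
      have "sqrt mu + 1 \<ge> 1" using mu0 by simp
      then have x1: "(sqrt mu + 1)\<^sup>2 \<ge> 1" by (rule one_le_power)
      have "1 * 1 \<le> k * (sqrt mu + 1)\<^sup>2" by (rule mult_mono) (use k1 x1 in auto)
      then have "k * (sqrt mu + 1)\<^sup>2 \<ge> 1" by simp
      then have "1 \<in> S" unfolding S_def using stopq_eq[of a 1 _ b c lam d, OF v] k_def by simp
      then show False using e by simp
    qed
    have cs: "continuous_on {0..} (stopq lam d a b c)"
      unfolding stopq_def[abs_def] r_val_def using ca cb cc by (intro continuous_intros) auto
    have Scl: "closed S"
    proof -
      have "S = {0..} \<inter> stopq lam d a b c -` {1..}" unfolding S_def by auto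
      then show ?thesis using continuous_closed_preimage[OF cs] by simp
    qed
    have Sbd: "bdd_below S" unfolding S_def by (auto intro: bdd_belowI[where m=0])
    have TinS: "T \<in> S" unfolding TS using closed_contains_Inf[OF Sne Sbd Scl] .
    have T0: "T \<ge> 0" and T1: "stopq lam d a b c T \<ge> 1" using TinS unfolding S_def by auto
    have stT: "\<forall>s\<in>{0..<T}. stopq lam d a b c s < 1"
    proof
      fix s assume s: "s \<in> {0..<T}"
      show "stopq lam d a b c s < 1"
      proof (rule ccontr)
        assume "\<not> ?thesis"
        then have "s \<in> S" using s unfolding S_def by auto
        then have "T \<le> s" unfolding TS using Sbd by (simp add: cInf_lower)
        then show False using s by simp
      qed
    qed
    have KT: "\<forall>s\<in>{0..T}. sqrt (a s) = sqrt mu + s \<and> sqrt (b s) = sqrt mu + s \<and> sqrt (c s) = sqrt mu + s"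
      using K[OF lam tr' mu0 T0 stT] .
    have full: "\<forall>t\<in>{0..T}. sqrt (a t) = sqrt mu + t \<and> sqrt (b t) = sqrt mu + t \<and>
                         sqrt (c t) = sqrt mu + t \<and>
                         a t = (sqrt mu + t)\<^sup>2 \<and> b t = (sqrt mu + t)\<^sup>2 \<and> c t = (sqrt mu + t)\<^sup>2"
    proof
      fix t assume t: "t \<in> {0..T}"
      then show "sqrt (a t) = sqrt mu + t \<and> sqrt (b t) = sqrt mu + t \<and>
                         sqrt (c t) = sqrt mu + t \<and>
                         a t = (sqrt mu + t)\<^sup>2 \<and> b t = (sqrt mu + t)\<^sup>2 \<and> c t = (sqrt mu + t)\<^sup>2"
      proof -
        have e: "sqrt (a t) = sqrt mu + t" "sqrt (b t) = sqrt mu + t" "sqrt (c t) = sqrt mu + t"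
          using KT t by auto
        have n: "0 \<le> a t" "0 \<le> b t" "0 \<le> c t" using nn[of t] t by auto
        show ?thesis using e sq[OF e(1) n(1)] sq[OF e(2) n(2)] sq[OF e(3) n(3)] by simp
      qed
    qed
    have stv: "stopq lam d a b c t = k * (sqrt mu + t)\<^sup>2" if "t \<in> {0..T}" for t
      using stopq_eq[of a t _ b c lam d] full that k_def by auto
    define tt where "tt = 1 / sqrt k - sqrt mu"
    have kpos: "k > 0" using k1 by simp
    have "(1/4) / sqrt L \<le> (1/2) / sqrt L" using sL by (intro divide_right_mono) auto
    then have tt0: "tt \<ge> 0" unfolding tt_def using smu ik by linarith
    have Tge: "T \<ge> tt"
    proof -
      have "k * (sqrt mu + T)\<^sup>2 \<ge> 1" using stv[of T] T0 T1 by simp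
      then have "(sqrt mu + T)\<^sup>2 \<ge> (1 / sqrt k)\<^sup>2" using kpos
        by (simp add: power_divide field_simps)
      then have "sqrt mu + T \<ge> 1 / sqrt k"
        using T0 mu0 power2_le_imp_le[of "1 / sqrt k" "sqrt mu + T"] by simp
      then show ?thesis unfolding tt_def by simp
    qed
    have Tle: "T \<le> tt"
    proof (rule ccontr)
      assume "\<not> ?thesis"
      then have "tt \<in> {0..<T}" using tt0 by simp
      then have "stopq lam d a b c tt < 1" using stT by blast
      moreover have "stopq lam d a b c tt = 1"
        using stv[of tt] \<open>tt \<in> {0..<T}\<close> kpos unfolding tt_def
        by (simp add: power_divide)
      ultimately show False by simp
    qed
    have lowb: "(1/4) / sqrt L \<le> T" using Tge ik smu unfolding tt_def by simp
    have upb: "T \<le> 1 / sqrt L" proof -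
      have "sqrt mu \<ge> 0" using mu0 by simp
      then show ?thesis using Tle ik unfolding tt_def by linarith
    qed
    show "let mu = rho0 d / (real d + lam); T = T1p lam d a b c in
          {t. 0 \<le> t \<and> stopq lam d a b c t \<ge> 1} \<noteq> {} \<and>
          (\<forall>t\<in>{0..T}. sqrt (a t) = sqrt mu + t \<and> sqrt (b t) = sqrt mu + t \<and>
                         sqrt (c t) = sqrt mu + t \<and>
                         a t = (sqrt mu + t)\<^sup>2 \<and> b t = (sqrt mu + t)\<^sup>2 \<and> c t = (sqrt mu + t)\<^sup>2) \<and>
          1/4 / sqrt (real d + lam) \<le> T \<and> T \<le> 1 / sqrt (real d + lam)"
    proof -
      have fin: "S \<noteq> {} \<and> (\<forall>t\<in>{0..T}. sqrt (a t) = sqrt mu + t \<and> sqrt (b t) = sqrt mu + t \<and>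
                         sqrt (c t) = sqrt mu + t \<and>
                         a t = (sqrt mu + t)\<^sup>2 \<and> b t = (sqrt mu + t)\<^sup>2 \<and> c t = (sqrt mu + t)\<^sup>2) \<and>
          1/4 / sqrt L \<le> T \<and> T \<le> 1 / sqrt L"
        using Sne full lowb upb by blast
      show ?thesis unfolding Let_def by (rule fin[unfolded mu_def T_def L_def S_def])
    qed
  qed
  qed
qed

end
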